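(* Let $a<b$ be real numbers, let $M\colon[a,b]\to\mathbb{R}$ be non-decreasing, and let $N\colon[M(a),M(b)]\to\mathbb{R}$ be non-decreasing. Let $\Lambda=N\circ M\colon[a,b]\to\mathbb{R}$, let $\lambda$ be the measure on $[a,b]$ corresponding to $\Lambda$, and let $\nu$ be the measure on $[M(a),M(b)]$ corresponding to $N$. Let \[H=\{y\in[M(a),M(b)] : M^{-1}[\{y\}]\text{ contains more than one point}\},\] and let $X\colon[M(a),M(b)]\to[a,b]$ be defined by $X(y)=\inf\{x\in[a,b]: y\le M(x)\}$. Suppose that $N$ is right-continuous at $y$ for each $y\in H$ (where, by convention, $N$ is considered right-continuous at $M(b)$, with $N(M(b)+)=N(M(b))$). Then $\lambda$ is the image measure of $\nu$ under $X$, i.e. $\lambda(E)=\nu(X^{-1}[E])$ for every Borel set $E\subseteq[a,b]$, and for each bounded Borel function $f\colon[a,b]\to\mathbb{R}$, \[\int_a^b f(x)\,dN(M(x))=\int_{M(a)}^{M(b)} f(X(y))\,dN(y).\]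
   Context: "Non-decreasing" is what the paper calls increasing. For a non-decreasing function $F\colon[c,d]\to\mathbb{R}$, the measure corresponding to $F$ is the unique Borel measure $\mu$ on $[c,d]$ such that for every continuous $f\colon[c,d]\to\mathbb{R}$, $\int_{[c,d]} f\,d\mu$ equals the Riemann–Stieltjes integral $\int_c^d f(x)\,dF(x)$. For a bounded Borel function $f$, the Lebesgue–Stieltjes integral $\int_c^d f(x)\,dF(x)$ is defined as $\int_{[c,d]} f\,d\mu$. The notation $\int_a^b f(x)\,dN(M(x))$ means $\int_a^b f(x)\,d\Lambda(x)$ with $\Lambda=N\circ M$. *)

theory Defs
  imports "HOL-Analysis.Analysis"
begin

definition RS_tagged_partition :: "real \<Rightarrow> real \<Rightarrow> nat \<Rightarrow> (nat \<Rightarrow> real) \<Rightarrow> (nat \<Rightarrow> real) \<Rightarrow> bool" where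
  "RS_tagged_partition c d n x t \<longleftrightarrow>
     x 0 = c \<and> x n = d \<and> (\<forall>i<n. x i < x (Suc i) \<and> x i \<le> t i \<and> t i \<le> x (Suc i))"

definition RS_sum :: "(real \<Rightarrow> real) \<Rightarrow> (real \<Rightarrow> real) \<Rightarrow> nat \<Rightarrow> (nat \<Rightarrow> real) \<Rightarrow> (nat \<Rightarrow> real) \<Rightarrow> real" where
  "RS_sum f F n x t = (\<Sum>i<n. f (t i) * (F (x (Suc i)) - F (x i)))"

definition has_RS_integral :: "(real \<Rightarrow> real) \<Rightarrow> (real \<Rightarrow> real) \<Rightarrow> real \<Rightarrow> real \<Rightarrow> real \<Rightarrow> bool" where
  "has_RS_integral f F c d I \<longleftrightarrow>
     (\<forall>\<epsilon>>0. \<exists>\<delta>>0. \<forall>n x t. RS_tagged_partition c d n x t \<and> (\<forall>i<n. x (Suc i) - x i < \<delta>)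
        \<longrightarrow> \<bar>RS_sum f F n x t - I\<bar> < \<epsilon>)"

definition corresponding_measure :: "(real \<Rightarrow> real) \<Rightarrow> real \<Rightarrow> real \<Rightarrow> real measure \<Rightarrow> bool" where
  "corresponding_measure F c d \<mu> \<longleftrightarrow>
     space \<mu> = {c..d} \<and> sets \<mu> = sets (restrict_space borel {c..d}) \<and> finite_measure \<mu> \<and>
     (\<forall>f. continuous_on {c..d} f \<longrightarrow> has_RS_integral f F c d (integral\<^sup>L \<mu> f))"

definition gen_inverse :: "(real \<Rightarrow> real) \<Rightarrow> real \<Rightarrow> real \<Rightarrow> real \<Rightarrow> real" where
  "gen_inverse M a b y = Inf {x \<in> {a..b}. y \<le> M x}"

end

theory Submission
  imports Defs
begin


lemma part_mono:
  assumes "\<forall>i<n. x i < x (Suc i)" "i \<le> j" "j \<le> n"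
  shows "x i \<le> (x j::real)"
  using assms(2,3)
proof (induction j)
  case 0 then show ?case by simp
next
  case (Suc j)
  show ?case
  proof (cases "i = Suc j")
    case True then show ?thesis by simp
  next
    case False
    then have "i \<le> j" using Suc.prems by simp
    then have "x i \<le> x j" using Suc by simp
    also have "x j < x (Suc j)" using assms(1) Suc.prems by simp
    finally show ?thesis by simp
  qed
qed

lemma part_in:
  assumes "RS_tagged_partition c d n x t" "i \<le> n"
  shows "c \<le> x i" "x i \<le> d"
  using part_mono[of n x 0 i] part_mono[of n x i n] assms
  by (auto simp: RS_tagged_partition_def)

lemma part_exists:
  assumes "c \<le> d" "\<delta> > 0"
  shows "\<exists>n x t. RS_tagged_partition c d n x t \<and> (\<forall>i<n. x (Suc i) - x i < \<delta>)"
proof (cases "c = d")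
  case True
  then show ?thesis
    by (intro exI[of _ 0] exI[of _ "\<lambda>_. c"]) (auto simp: RS_tagged_partition_def)
next
  case False
  then have cd: "c < d" using assms by simp
  obtain n :: nat where n: "(d - c) / \<delta> < n" using reals_Archimedean2 by blast
  have npos: "n > 0" using n cd assms(2)
    by (metis divide_pos_pos diff_gt_0_iff_gt gr_zeroI less_asym of_nat_0)
  have h: "(d - c) / n < \<delta>" using n npos assms(2)
    by (simp add: field_simps)
  define x where "x = (\<lambda>i::nat. c + i * ((d - c) / n))"
  have "RS_tagged_partition c d n x x"
    unfolding RS_tagged_partition_def x_def using npos cd
    by (auto simp: field_simps)
  moreover have "\<forall>i<n. x (Suc i) - x i < \<delta>"
  proof (intro allI impI)
    fix i assume "i < n"
    have "x (Suc i) - x i = (d - c) / n" using npos unfolding x_def by (simp add: field_simps)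
    then show "x (Suc i) - x i < \<delta>" using h by simp
  qed
  ultimately show ?thesis by blast
qed

lemma RS_lower:
  assumes F: "mono_on {c..d} F" and I: "has_RS_integral h F c d I"
    and u: "c \<le> u" "u < p" "p \<le> d"
    and h0: "\<forall>z\<in>{c..d}. 0 \<le> h z" and h1: "\<forall>z\<in>{c..p}. h z = 1"
  shows "F u - F c \<le> I"
proof (rule field_le_epsilon)
  fix e :: real assume e: "e > 0"
  obtain \<delta> where \<delta>: "\<delta> > 0" "\<forall>n x t. RS_tagged_partition c d n x t \<and> (\<forall>i<n. x (Suc i) - x i < \<delta>)
        \<longrightarrow> \<bar>RS_sum h F n x t - I\<bar> < e"
    using I e unfolding has_RS_integral_def by blast
  obtain n x t where P: "RS_tagged_partition c d n x t" and mesh: "\<forall>i<n. x (Suc i) - x i < min \<delta> (p - u)"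
    using part_exists[of c d "min \<delta> (p - u)"] u \<delta> by auto
  have cl: "\<bar>RS_sum h F n x t - I\<bar> < e" using \<delta> P mesh by auto
  have x0: "x 0 = c" "x n = d" using P by (auto simp: RS_tagged_partition_def)
  have "F u - F c = (\<Sum>i<n. F (min (x (Suc i)) u) - F (min (x i) u))"
    by (subst sum_lessThan_telescope) (use x0 u in auto)
  also have "\<dots> \<le> RS_sum h F n x t"
    unfolding RS_sum_def
  proof (rule sum_mono)
    fix i assume "i \<in> {..<n}"
    then have i: "i < n" by simp
    have xi: "c \<le> x i" "x i \<le> d" "c \<le> x (Suc i)" "x (Suc i) \<le> d"
      using part_in[OF P, of i] part_in[OF P, of "Suc i"] i by auto
    have ti: "x i \<le> t i" "t i \<le> x (Suc i)" "x i < x (Suc i)" using P i by (auto simp: RS_tagged_partition_def)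
    have dF: "F (x i) \<le> F (x (Suc i))" using F xi ti by (auto simp: mono_on_def)
    show "F (min (x (Suc i)) u) - F (min (x i) u) \<le> h (t i) * (F (x (Suc i)) - F (x i))"
    proof (cases "x i < u")
      case True
      then have "x (Suc i) < p" using mesh i by force
      then have "h (t i) = 1" using h1 ti xi by auto
      moreover have "F (min (x (Suc i)) u) \<le> F (x (Suc i))"
        using F xi u True by (intro mono_onD[OF F]) auto
      ultimately show ?thesis using True by simp
    next
      case False
      then have "F (min (x (Suc i)) u) - F (min (x i) u) = 0" using ti by simp
      moreover have "0 \<le> h (t i)" using h0 ti xi by auto
      ultimately show ?thesis using dF by simp
    qed
  qed
  finally show "F u - F c \<le> I + e" using cl by linarith
qed

lemma RS_upper:
  assumes F: "mono_on {c..d} F" and I: "has_RS_integral h F c d I"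
    and v: "c \<le> q" "q < v" "v \<le> d"
    and h0: "\<forall>z\<in>{c..d}. 0 \<le> h z \<and> h z \<le> 1" and h1: "\<forall>z\<in>{q..d}. h z = 0"
  shows "I \<le> F v - F c"
proof (rule field_le_epsilon)
  fix e :: real assume e: "e > 0"
  obtain \<delta> where \<delta>: "\<delta> > 0" "\<forall>n x t. RS_tagged_partition c d n x t \<and> (\<forall>i<n. x (Suc i) - x i < \<delta>)
        \<longrightarrow> \<bar>RS_sum h F n x t - I\<bar> < e"
    using I e unfolding has_RS_integral_def by blast
  obtain n x t where P: "RS_tagged_partition c d n x t" and mesh: "\<forall>i<n. x (Suc i) - x i < min \<delta> (v - q)"
    using part_exists[of c d "min \<delta> (v - q)"] v \<delta> by auto
  have cl: "\<bar>RS_sum h F n x t - I\<bar> < e" using \<delta> P mesh by auto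
  have x0: "x 0 = c" "x n = d" using P by (auto simp: RS_tagged_partition_def)
  have "RS_sum h F n x t \<le> (\<Sum>i<n. F (min (x (Suc i)) v) - F (min (x i) v))"
    unfolding RS_sum_def
  proof (rule sum_mono)
    fix i assume "i \<in> {..<n}"
    then have i: "i < n" by simp
    have xi: "c \<le> x i" "x i \<le> d" "c \<le> x (Suc i)" "x (Suc i) \<le> d"
      using part_in[OF P, of i] part_in[OF P, of "Suc i"] i by auto
    have ti: "x i \<le> t i" "t i \<le> x (Suc i)" "x i < x (Suc i)" using P i by (auto simp: RS_tagged_partition_def)
    have dF: "F (x i) \<le> F (x (Suc i))" using F xi ti by (auto simp: mono_on_def)
    show "h (t i) * (F (x (Suc i)) - F (x i)) \<le> F (min (x (Suc i)) v) - F (min (x i) v)"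
    proof (cases "x (Suc i) \<le> v")
      case True
      then have "F (min (x (Suc i)) v) - F (min (x i) v) = F (x (Suc i)) - F (x i)" using ti by simp
      moreover have "h (t i) \<le> 1" using h0 ti xi by auto
      ultimately show ?thesis using dF
        by (metis diff_ge_0_iff_ge mult_left_le_one_le h0 ti xi atLeastAtMost_iff order_trans)
    next
      case False
      then have "q < x i" using mesh i by force
      then have "h (t i) = 0" using h1 ti xi by auto
      moreover have "F (min (x i) v) \<le> F v"
        using F xi v by (intro mono_onD[OF F]) auto
      ultimately show ?thesis using False by simp
    qed
  qed
  also have "\<dots> = F v - F c"
    by (subst sum_lessThan_telescope) (use x0 v in auto)
  finally show "I \<le> F v - F c + e" using cl by linarith
qed




lemma cm_basic:
  assumes "corresponding_measure F c d \<mu>"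
  shows "space \<mu> = {c..d}" "sets \<mu> = sets (restrict_space borel {c..d})" "finite_measure \<mu>"
    "\<And>g. continuous_on {c..d} g \<Longrightarrow> has_RS_integral g F c d (integral\<^sup>L \<mu> g)"
  using assms unfolding corresponding_measure_def by auto

lemma cm_sets:
  assumes "corresponding_measure F c d \<mu>"
  shows "A \<in> sets \<mu> \<longleftrightarrow> A \<subseteq> {c..d} \<and> A \<in> sets borel"
  using cm_basic(2)[OF assms] by (simp add: sets_restrict_space_iff)

lemma cm_meas:
  assumes "corresponding_measure F c d \<mu>" "continuous_on {c..d} g"
  shows "g \<in> borel_measurable \<mu>"
proof -
  have eq: "borel_measurable \<mu> = borel_measurable (restrict_space borel {c..d})"
    by (rule measurable_cong_sets[OF cm_basic(2)[OF assms(1)] refl])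
  show ?thesis unfolding eq by (rule borel_measurable_continuous_on_restrict[OF assms(2)])
qed

lemma cm_total:
  assumes cm: "corresponding_measure F c d \<mu>" and cd: "c \<le> d"
  shows "measure \<mu> {c..d} = F d - F c"
proof -
  interpret finite_measure \<mu> using cm_basic[OF cm] by simp
  have I: "has_RS_integral (\<lambda>_. 1) F c d (integral\<^sup>L \<mu> (\<lambda>_. 1))"
    using cm_basic(4)[OF cm, of "\<lambda>_. 1"] by simp
  have eq: "integral\<^sup>L \<mu> (\<lambda>_. 1::real) = measure \<mu> {c..d}"
    using cm_basic(1)[OF cm] by simp
  have S: "RS_sum (\<lambda>_. 1) F n x t = F d - F c" if "RS_tagged_partition c d n x t" for n x t
    using that unfolding RS_sum_def RS_tagged_partition_def
    by (simp add: sum_lessThan_telescope[where f="\<lambda>i. F (x i)"])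
  show ?thesis
  proof (rule ccontr)
    assume ne: "measure \<mu> {c..d} \<noteq> F d - F c"
    define e where "e = \<bar>F d - F c - measure \<mu> {c..d}\<bar>"
    have e: "e > 0" using ne by (simp add: e_def)
    obtain \<delta> where \<delta>: "\<delta> > 0" "\<forall>n x t. RS_tagged_partition c d n x t \<and> (\<forall>i<n. x (Suc i) - x i < \<delta>)
        \<longrightarrow> \<bar>RS_sum (\<lambda>_. 1) F n x t - integral\<^sup>L \<mu> (\<lambda>_. 1)\<bar> < e"
      using I e unfolding has_RS_integral_def by blast
    obtain n x t where P: "RS_tagged_partition c d n x t" and mesh: "\<forall>i<n. x (Suc i) - x i < \<delta>"
      using part_exists[OF cd \<delta>(1)] by auto
    have "\<bar>F d - F c - measure \<mu> {c..d}\<bar> < e" using \<delta>(2) P mesh S[OF P] eq by metis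
    then show False by (simp add: e_def)
  qed
qed

definition hat :: "real \<Rightarrow> real \<Rightarrow> real \<Rightarrow> real" where
  "hat p q = (\<lambda>z. max 0 (min 1 ((q - z) / (q - p))))"

lemma hat_props:
  fixes p q :: real
  assumes "p < q"
  defines "h \<equiv> hat p q"
  shows "continuous_on S h" "\<And>z. 0 \<le> h z" "\<And>z. h z \<le> 1" "\<And>z. z \<le> p \<Longrightarrow> h z = 1"
    "\<And>z. q \<le> z \<Longrightarrow> h z = 0"
proof -
  show "continuous_on S h" unfolding h_def hat_def by (intro continuous_intros) (use assms in auto)
  show "\<And>z. 0 \<le> h z" "\<And>z. h z \<le> 1" unfolding h_def hat_def by auto
  show "\<And>z. z \<le> p \<Longrightarrow> h z = 1" unfolding h_def hat_def using assms by (auto simp: field_simps)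
  show "\<And>z. q \<le> z \<Longrightarrow> h z = 0" unfolding h_def hat_def using assms
    by (auto simp: divide_nonpos_pos)
qed

lemma cm_le:
  assumes cm: "corresponding_measure F c d \<mu>" and F: "mono_on {c..d} F"
    and y: "c \<le> y" "y < t" "t \<le> d"
  shows "measure \<mu> {c..y} \<le> F t - F c"
proof -
  interpret finite_measure \<mu> using cm_basic[OF cm] by simp
  define q where "q = (y + t) / 2"
  have yq: "y < q" "q < t" using y by (auto simp: q_def)
  define h where "h = hat y q"
  note hp = hat_props[OF yq(1), folded h_def]
  have hm: "h \<in> borel_measurable \<mu>" using cm_meas[OF cm hp(1)] .
  have hi: "integrable \<mu> h"
    by (rule integrable_const_bound[where B=1]) (use hp hm in auto)
  have I: "has_RS_integral h F c d (integral\<^sup>L \<mu> h)" using cm_basic(4)[OF cm hp(1)] .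
  have up: "integral\<^sup>L \<mu> h \<le> F t - F c"
    by (rule RS_upper[OF F I, of q]) (use y yq hp in auto)
  have sets: "{c..y} \<in> sets \<mu>" using cm_sets[OF cm] y by auto
  have "measure \<mu> {c..y} = integral\<^sup>L \<mu> (indicator {c..y})"
    using sets by simp
  also have "\<dots> \<le> integral\<^sup>L \<mu> h"
    by (rule integral_mono'[OF hi]) (use hp in \<open>auto simp: indicator_def\<close>)
  finally show ?thesis using up by simp
qed

lemma cm_ge:
  assumes cm: "corresponding_measure F c d \<mu>" and F: "mono_on {c..d} F"
    and u: "c \<le> u" "u < s" "s \<le> d"
  shows "F u - F c \<le> measure \<mu> {c..s}"
proof -
  interpret finite_measure \<mu> using cm_basic[OF cm] by simp
  define p where "p = (u + s) / 2"
  have ps: "u < p" "p < s" using u by (auto simp: p_def)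
  define h where "h = hat p s"
  note hp = hat_props[OF ps(2), folded h_def]
  have hm: "h \<in> borel_measurable \<mu>" using cm_meas[OF cm hp(1)] .
  have I: "has_RS_integral h F c d (integral\<^sup>L \<mu> h)" using cm_basic(4)[OF cm hp(1)] .
  have lo: "F u - F c \<le> integral\<^sup>L \<mu> h"
    by (rule RS_lower[OF F I, of u p]) (use u ps hp in auto)
  have sets: "{c..s} \<in> sets \<mu>" using cm_sets[OF cm] u by auto
  have ii: "integrable \<mu> (indicator {c..s} :: real \<Rightarrow> real)"
    using sets emeasure_finite[of "{c..s}"] by (simp add: integrable_indicator_iff less_top[symmetric])
  have "integral\<^sup>L \<mu> h \<le> integral\<^sup>L \<mu> (indicator {c..s})"
  proof (rule integral_mono'[OF ii])
    fix z assume "z \<in> space \<mu>"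
    then have "z \<in> {c..d}" using cm_basic(1)[OF cm] by simp
    then show "h z \<le> indicator {c..s} z" using hp(3,5)[of z] by (auto simp: indicator_def)
  qed (auto simp: indicator_def)
  also have "\<dots> = measure \<mu> {c..s}" using sets by simp
  finally show ?thesis using lo by simp
qed

lemma cm_Inf:
  assumes cm: "corresponding_measure F c d \<mu>" and F: "mono_on {c..d} F"
    and y: "c \<le> y" "y < d"
  shows "measure \<mu> {c..y} = Inf (F ` {y<..d}) - F c"
proof -
  interpret finite_measure \<mu> using cm_basic[OF cm] by simp
  have ne: "F ` {y<..d} \<noteq> {}" using y by auto
  have bdd: "bdd_below (F ` {y<..d})"
    by (rule bdd_belowI[of _ "F y"]) (use F y in \<open>auto intro: mono_onD[OF F]\<close>)
  have up: "measure \<mu> {c..y} + F c \<le> Inf (F ` {y<..d})"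
    by (rule cInf_greatest[OF ne]) (use cm_le[OF cm F] y in force)
  define A where "A = (\<lambda>n::nat. {c..y + (d - y) / Suc n})"
  have le: "(d - y) / Suc n \<le> d - y" for n :: nat
    using divide_left_mono[of 1 "Suc n" "d - y"] y by simp
  have An: "A n \<in> sets \<mu>" for n
  proof -
    have "y + (d - y) / Suc n \<le> d" using le[of n] by linarith
    then show ?thesis unfolding A_def cm_sets[OF cm] using y by auto
  qed
  have As: "range A \<subseteq> sets \<mu>" using An by auto
  have Ad: "decseq A" unfolding decseq_def A_def
  proof (intro allI impI)
    fix m n :: nat assume "m \<le> n"
    then have "(d - y) / Suc n \<le> (d - y) / Suc m" using y by (intro divide_left_mono) auto
    then show "{c..y + (d - y) / Suc n} \<subseteq> {c..y + (d - y) / Suc m}" by auto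
  qed
  have AI: "(\<Inter>n. A n) = {c..y}"
  proof
    show "{c..y} \<subseteq> (\<Inter>n. A n)"
    proof (intro subsetI, unfold INT_iff, intro ballI)
      fix z and n :: nat assume "z \<in> {c..y}"
      moreover have "0 \<le> (d - y) / Suc n" using y by simp
      ultimately show "z \<in> A n" unfolding A_def by auto
    qed
    show "(\<Inter>n. A n) \<subseteq> {c..y}"
    proof
      fix z assume z: "z \<in> (\<Inter>n. A n)"
      have "z \<le> y"
      proof (rule ccontr)
        assume "\<not> z \<le> y"
        then have zy: "z > y" by simp
        obtain n :: nat where n: "(d - y) / (z - y) < n" using reals_Archimedean2 by blast
        then have "d - y < n * (z - y)" using zy by (simp add: divide_less_eq)
        also have "\<dots> \<le> Suc n * (z - y)" using zy by (intro mult_right_mono) auto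
        finally have "(d - y) / Suc n < z - y" by (simp add: divide_less_eq mult.commute)
        moreover have "z \<le> y + (d - y) / Suc n" using z by (auto simp: A_def)
        ultimately show False by simp
      qed
      then show "z \<in> {c..y}" using z by (auto simp: A_def)
    qed
  qed
  have lim: "(\<lambda>n. measure \<mu> (A n)) \<longlonglongrightarrow> measure \<mu> {c..y}"
    using finite_Lim_measure_decseq[OF As Ad] AI by simp
  have "Inf (F ` {y<..d}) - F c \<le> measure \<mu> {c..y}"
  proof (rule LIMSEQ_le_const[OF lim], intro exI allI impI)
    fix n :: nat
    define u where "u = y + (d - y) / (2 * Suc n)"
    define s where "s = y + (d - y) / Suc n"
    have yn: "y * real n \<le> d * real n" using y by (intro mult_right_mono) auto
    have u: "y < u" "u < s" "s \<le> d" using y yn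
      by (auto simp: u_def s_def field_simps)
    have "Inf (F ` {y<..d}) \<le> F u"
      by (rule cInf_lower[OF _ bdd]) (use u in auto)
    also have "F u - F c \<le> measure \<mu> {c..s}" by (rule cm_ge[OF cm F]) (use u y in auto)
    finally show "Inf (F ` {y<..d}) - F c \<le> measure \<mu> (A n)"
      by (simp add: A_def s_def)
  qed
  then show ?thesis using up by simp
qed




lemma rc_Inf:
  fixes N :: "real \<Rightarrow> real"
  assumes N: "mono_on {c..d} N" and m: "c \<le> m" "m < d" and rc: "continuous (at_right m) N"
  shows "Inf (N ` {m<..d}) = N m"
proof (rule order.antisym)
  have ne: "N ` {m<..d} \<noteq> {}" using m by auto
  have bdd: "bdd_below (N ` {m<..d})"
    by (rule bdd_belowI[of _ "N m"]) (use m in \<open>auto intro: mono_onD[OF N]\<close>)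
  show "N m \<le> Inf (N ` {m<..d})"
    by (rule cInf_greatest[OF ne]) (use m in \<open>auto intro: mono_onD[OF N]\<close>)
  show "Inf (N ` {m<..d}) \<le> N m"
  proof (rule field_le_epsilon)
    fix e :: real assume e: "e > 0"
    have "(N \<longlongrightarrow> N m) (at_right m)" using rc by (simp add: continuous_within)
    then have "eventually (\<lambda>z. N z < N m + e) (at_right m)"
      using e by (intro order_tendstoD(2)) auto
    then obtain b where b: "b > m" "\<And>z. z > m \<Longrightarrow> z < b \<Longrightarrow> N z < N m + e"
      unfolding eventually_at_right_field by blast
    define z where "z = min ((m + b) / 2) d"
    have z: "m < z" "z < b" "z \<le> d" using b m by (auto simp: z_def min_def)
    have "Inf (N ` {m<..d}) \<le> N z" by (rule cInf_lower[OF _ bdd]) (use z in auto)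
    also have "\<dots> < N m + e" using b z by auto
    finally show "Inf (N ` {m<..d}) \<le> N m + e" by simp
  qed
qed

lemma gi_in:
  assumes "a < b" "mono_on {a..b} M" "y \<le> M b"
  shows "gen_inverse M a b y \<in> {a..b}"
proof -
  have ne: "{x \<in> {a..b}. y \<le> M x} \<noteq> {}" using assms by auto
  have "a \<le> Inf {x \<in> {a..b}. y \<le> M x}" by (rule cInf_greatest[OF ne]) auto
  moreover have "Inf {x \<in> {a..b}. y \<le> M x} \<le> b"
    by (rule cInf_lower) (use assms in \<open>auto intro: bdd_belowI[of _ a]\<close>)
  ultimately show ?thesis by (simp add: gen_inverse_def)
qed

lemma gi_mono:
  assumes "a < b" "mono_on {a..b} M"
  shows "mono_on {M a..M b} (gen_inverse M a b)"
proof (rule mono_onI)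
  fix y1 y2 assume y: "y1 \<in> {M a..M b}" "y2 \<in> {M a..M b}" "y1 \<le> y2"
  have ne: "{x \<in> {a..b}. y2 \<le> M x} \<noteq> {}" using assms y by auto
  show "gen_inverse M a b y1 \<le> gen_inverse M a b y2"
    unfolding gen_inverse_def
    by (rule cInf_superset_mono[OF ne]) (use y in \<open>auto intro: bdd_belowI[of _ a]\<close>)
qed

lemma gi_le_iff:
  assumes ab: "a < b" and M: "mono_on {a..b} M" and x: "a \<le> x" "x < b"
    and y: "y \<in> {M a..M b}"
  shows "gen_inverse M a b y \<le> x \<longleftrightarrow> y \<le> Inf (M ` {x<..b})"
proof -
  define S where "S = {t \<in> {a..b}. y \<le> M t}"
  have ne: "S \<noteq> {}" using y ab by (auto simp: S_def)
  have bddS: "bdd_below S" by (rule bdd_belowI[of _ a]) (auto simp: S_def)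
  have neM: "M ` {x<..b} \<noteq> {}" using x by auto
  have bddM: "bdd_below (M ` {x<..b})"
    by (rule bdd_belowI[of _ "M x"]) (use x in \<open>auto intro: mono_onD[OF M]\<close>)
  show ?thesis
  proof
    assume le: "gen_inverse M a b y \<le> x"
    show "y \<le> Inf (M ` {x<..b})"
    proof (rule cInf_greatest[OF neM], clarsimp)
      fix t assume t: "x < t" "t \<le> b"
      have "Inf S < t" using le t by (simp add: gen_inverse_def S_def)
      then obtain s where s: "s \<in> S" "s < t" using cInf_lessD[OF ne] by blast
      then have "y \<le> M s" by (simp add: S_def)
      also have "M s \<le> M t" using s t x by (intro mono_onD[OF M]) (auto simp: S_def)
      finally show "y \<le> M t" .
    qed
  next
    assume le: "y \<le> Inf (M ` {x<..b})"
    have "Inf S \<le> x"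
    proof (rule dense_ge_bounded[OF x(2)])
      fix w assume w: "x < w" "w < b"
      have "Inf (M ` {x<..b}) \<le> M w" by (rule cInf_lower[OF _ bddM]) (use w in auto)
      then have "w \<in> S" using le w x by (auto simp: S_def)
      then show "Inf S \<le> w" by (rule cInf_lower[OF _ bddS])
    qed
    then show "gen_inverse M a b y \<le> x" by (simp add: gen_inverse_def S_def)
  qed
qed




lemma key:
  fixes a b :: real and M N :: "real \<Rightarrow> real" and lam nu :: "real measure"
  assumes ab: "a < b"
    and M: "mono_on {a..b} M"
    and N: "mono_on {M a..M b} N"
    and lam: "corresponding_measure (N \<circ> M) a b lam"
    and nu: "corresponding_measure N (M a) (M b) nu"
    and H: "\<forall>y \<in> {y \<in> {M a..M b}. \<exists>x1 \<in> {a..b}. \<exists>x2 \<in> {a..b}. x1 \<noteq> x2 \<and> M x1 = y \<and> M x2 = y}.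
           y < M b \<longrightarrow> continuous (at_right y) N"
    and x: "a \<le> x" "x < b"
  shows "measure lam {a..x} = measure nu {M a..Inf (M ` {x<..b})}"
proof -
  define m where "m = Inf (M ` {x<..b})"
  have neM: "M ` {x<..b} \<noteq> {}" using x by auto
  have bddM: "bdd_below (M ` {x<..b})"
    by (rule bdd_belowI[of _ "M x"]) (use x in \<open>auto intro: mono_onD[OF M]\<close>)
  have mx: "M x \<le> m" unfolding m_def
    by (rule cInf_greatest[OF neM]) (use x in \<open>auto intro: mono_onD[OF M]\<close>)
  have ma: "M a \<le> M x" using x ab by (intro mono_onD[OF M]) auto
  have mb: "m \<le> M b" unfolding m_def by (rule cInf_lower[OF _ bddM]) (use x in auto)
  have Mt: "m \<le> M t" "M t \<le> M b" "M a \<le> M t" if "t \<in> {x<..b}" for t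
  proof -
    show "m \<le> M t" unfolding m_def by (rule cInf_lower[OF _ bddM]) (use that in auto)
    show "M t \<le> M b" using that x by (intro mono_onD[OF M]) auto
    show "M a \<le> M t" using that x by (intro mono_onD[OF M]) auto
  qed
  have NM: "mono_on {a..b} (N \<circ> M)"
  proof (rule mono_onI)
    fix r s assume rs: "r \<in> {a..b}" "s \<in> {a..b}" "r \<le> s"
    have "M r \<le> M s" "M a \<le> M r" "M s \<le> M b" using rs by (auto intro: mono_onD[OF M])
    then show "(N \<circ> M) r \<le> (N \<circ> M) s" by (auto intro: mono_onD[OF N])
  qed
  have L: "measure lam {a..x} = Inf ((N \<circ> M) ` {x<..b}) - (N \<circ> M) a"
    by (rule cm_Inf[OF lam NM]) (use x in auto)
  have neL: "(N \<circ> M) ` {x<..b} \<noteq> {}" using x by auto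
  have bddL: "bdd_below ((N \<circ> M) ` {x<..b})"
    by (rule bdd_belowI[of _ "N m"]) (use Mt mx ma mb in \<open>auto intro!: mono_onD[OF N]\<close>)
  show ?thesis
  proof (cases "m = M b")
    case True
    have "(N \<circ> M) ` {x<..b} = {N (M b)}"
    proof
      show "(N \<circ> M) ` {x<..b} \<subseteq> {N (M b)}" using Mt True by force
      show "{N (M b)} \<subseteq> (N \<circ> M) ` {x<..b}" using x by auto
    qed
    then have "measure lam {a..x} = N (M b) - N (M a)" using L by simp
    also have "\<dots> = measure nu {M a..M b}" using cm_total[OF nu] ma mx mb by simp
    finally show ?thesis using True by (simp add: m_def)
  next
    case False
    then have mlt: "m < M b" using mb by simp
    have R: "measure nu {M a..m} = Inf (N ` {m<..M b}) - N (M a)"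
      by (rule cm_Inf[OF nu N]) (use ma mx mlt in auto)
    have neR: "N ` {m<..M b} \<noteq> {}" using mlt by auto
    have bddR: "bdd_below (N ` {m<..M b})"
      by (rule bdd_belowI[of _ "N m"]) (use ma mx in \<open>auto intro!: mono_onD[OF N]\<close>)
    have eq: "Inf ((N \<circ> M) ` {x<..b}) = Inf (N ` {m<..M b})"
    proof (cases "\<exists>t0\<in>{x<..b}. M t0 = m")
      case True
      then obtain t0 where t0: "t0 \<in> {x<..b}" "M t0 = m" by blast
      have "Inf ((N \<circ> M) ` {x<..b}) = N m"
      proof (rule cInf_eq_minimum)
        show "N m \<in> (N \<circ> M) ` {x<..b}" using t0 by force
        fix z assume "z \<in> (N \<circ> M) ` {x<..b}"
        then obtain t where t: "t \<in> {x<..b}" "z = N (M t)" by auto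
        show "N m \<le> z" using Mt[OF t(1)] t ma mx by (auto intro!: mono_onD[OF N])
      qed
      moreover have "continuous (at_right m) N"
      proof -
        define t1 where "t1 = (x + t0) / 2"
        have t1: "t1 \<in> {x<..b}" "t1 \<noteq> t0" "t1 \<le> t0" using t0 by (auto simp: t1_def)
        have "M t1 \<le> M t0" using t1 t0 x by (intro mono_onD[OF M]) auto
        then have "M t1 = m" using Mt[OF t1(1)] t0 by simp
        then have "m \<in> {y \<in> {M a..M b}. \<exists>x1 \<in> {a..b}. \<exists>x2 \<in> {a..b}. x1 \<noteq> x2 \<and> M x1 = y \<and> M x2 = y}"
          using t0 t1 x ma mx mb by (intro CollectI conjI bexI[of _ t1] bexI[of _ t0]) auto
        then show ?thesis using H mlt by blast
      qed
      then have "Inf (N ` {m<..M b}) = N m" by (intro rc_Inf[OF N]) (use ma mx mlt in auto)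
      ultimately show ?thesis by simp
    next
      case False
      then have Mgt: "m < M t" if "t \<in> {x<..b}" for t using Mt[OF that] that by force
      show ?thesis
      proof (rule order.antisym)
        show "Inf (N ` {m<..M b}) \<le> Inf ((N \<circ> M) ` {x<..b})"
        proof (rule cInf_greatest[OF neL], clarsimp)
          fix t assume t: "x < t" "t \<le> b"
          show "Inf (N ` {m<..M b}) \<le> N (M t)"
            by (rule cInf_lower[OF _ bddR]) (use Mgt Mt t in auto)
        qed
        show "Inf ((N \<circ> M) ` {x<..b}) \<le> Inf (N ` {m<..M b})"
        proof (rule cInf_greatest[OF neR])
          fix zz assume "zz \<in> N ` {m<..M b}"
          then obtain z where z: "m < z" "z \<le> M b" and zz: "zz = N z" by auto
          obtain w where w: "w \<in> M ` {x<..b}" "w < z" using cInf_lessD[OF neM, of z] z by (auto simp: m_def)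
          then obtain t where t: "t \<in> {x<..b}" "M t < z" by auto
          have "Inf ((N \<circ> M) ` {x<..b}) \<le> (N \<circ> M) t" by (rule cInf_lower[OF _ bddL]) (use t in auto)
          also have "\<dots> \<le> N z" using t Mt[OF t(1)] z by (auto intro!: mono_onD[OF N])
          finally show "Inf ((N \<circ> M) ` {x<..b}) \<le> zz" using zz by simp
        qed
      qed
    qed
    show ?thesis using L R eq by (simp add: m_def)
  qed
qed




theorem mainTheorem1:
  fixes a b :: real and M N f :: "real \<Rightarrow> real" and lam nu :: "real measure"
  assumes "a < b"
    and "mono_on {a..b} M"
    and "mono_on {M a..M b} N"
    and "corresponding_measure (N \<circ> M) a b lam"
    and "corresponding_measure N (M a) (M b) nu"
    and "\<forall>y \<in> {y \<in> {M a..M b}. \<exists>x1 \<in> {a..b}. \<exists>x2 \<in> {a..b}. x1 \<noteq> x2 \<and> M x1 = y \<and> M x2 = y}.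
           y < M b \<longrightarrow> continuous (at_right y) N"
  shows "(\<forall>E \<in> sets lam. emeasure lam E = emeasure nu (gen_inverse M a b -` E \<inter> {M a..M b}))
     \<and> ((f \<in> borel_measurable lam \<and> bounded (f ` {a..b})) \<longrightarrow>
          integral\<^sup>L lam f = integral\<^sup>L nu (\<lambda>y. f (gen_inverse M a b y)))"
proof -
  note ab = assms(1) and M = assms(2) and N = assms(3) and lam = assms(4) and nu = assms(5)
    and H = assms(6)
  define X where "X = gen_inverse M a b"
  have Mab: "M a \<le> M b" using ab by (intro mono_onD[OF M]) auto
  interpret L: finite_measure lam using cm_basic[OF lam] by simp
  interpret V: finite_measure nu using cm_basic[OF nu] by simp
  have spL: "space lam = {a..b}" and spV: "space nu = {M a..M b}"
    using cm_basic(1)[OF lam] cm_basic(1)[OF nu] by auto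
  have Xin: "X y \<in> {a..b}" if "y \<in> {M a..M b}" for y
    unfolding X_def by (rule gi_in[OF ab M]) (use that in auto)
  have Xm: "X \<in> measurable nu borel"
  proof -
    have eq: "measurable nu borel = measurable (restrict_space borel {M a..M b}) borel"
      by (rule measurable_cong_sets[OF cm_basic(2)[OF nu] refl])
    show ?thesis unfolding eq X_def by (rule borel_measurable_mono_on_fnc[OF gi_mono[OF ab M]])
  qed
  have idm: "id \<in> measurable lam borel"
  proof -
    have eq: "measurable lam borel = measurable (restrict_space borel {a..b}) borel"
      by (rule measurable_cong_sets[OF cm_basic(2)[OF lam] refl])
    show ?thesis unfolding eq by (rule measurable_restrict_space1) simp
  qed
  define P1 where "P1 = distr lam borel id"
  define P2 where "P2 = distr nu borel X"
  have e1: "emeasure P1 A = emeasure lam (A \<inter> {a..b})" if "A \<in> sets borel" for A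
    unfolding P1_def using emeasure_distr[OF idm that] spL by simp
  have e2: "emeasure P2 A = emeasure nu (X -` A \<inter> {M a..M b})" if "A \<in> sets borel" for A
    unfolding P2_def using emeasure_distr[OF Xm that] spV by simp
  have NM: "mono_on {a..b} (N \<circ> M)"
  proof (rule mono_onI)
    fix r s assume rs: "r \<in> {a..b}" "s \<in> {a..b}" "r \<le> s"
    have "M r \<le> M s" "M a \<le> M r" "M s \<le> M b" using rs by (auto intro: mono_onD[OF M])
    then show "(N \<circ> M) r \<le> (N \<circ> M) s" by (auto intro: mono_onD[OF N])
  qed
  have T: "measure lam {a..b} = measure nu {M a..M b}"
    using cm_total[OF lam] cm_total[OF nu] ab Mab by simp
  have setsL: "A \<in> sets lam" if "A \<subseteq> {a..b}" "A \<in> sets borel" for A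
    using cm_sets[OF lam] that by auto
  have setsV: "A \<in> sets nu" if "A \<subseteq> {M a..M b}" "A \<in> sets borel" for A
    using cm_sets[OF nu] that by auto
  have P12: "P1 = P2"
  proof (rule measure_eqI_lessThan)
    show "sets P1 = sets borel" "sets P2 = sets borel" by (simp_all add: P1_def P2_def)
    fix x :: real
    show "emeasure P1 {x<..} < \<infinity>" using e1[of "{x<..}"] L.emeasure_finite
      by (simp add: less_top[symmetric])
    show "emeasure P1 {x<..} = emeasure P2 {x<..}"
    proof -
      consider "x < a" | "a \<le> x" "x < b" | "b \<le> x" by linarith
      then show ?thesis
      proof cases
        case 1
        have s1: "{x<..} \<inter> {a..b} = {a..b}" using 1 by auto
        have s2: "X -` {x<..} \<inter> {M a..M b} = {M a..M b}" using 1 Xin by force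
        show ?thesis using T
          by (simp add: e1 e2 s1 s2 L.emeasure_eq_measure V.emeasure_eq_measure)
      next
        case 3
        have s1: "{x<..} \<inter> {a..b} = {}" using 3 by auto
        have s2: "X -` {x<..} \<inter> {M a..M b} = {}" using 3 Xin by force
        show ?thesis by (simp add: e1 e2 s1 s2)
      next
        case 2
        define m where "m = Inf (M ` {x<..b})"
        have bddM: "bdd_below (M ` {x<..b})"
          by (rule bdd_belowI[of _ "M x"]) (use 2 in \<open>auto intro: mono_onD[OF M]\<close>)
        have mb: "m \<le> M b" unfolding m_def by (rule cInf_lower[OF _ bddM]) (use 2 in auto)
        have s1: "{x<..} \<inter> {a..b} = {a..b} - {a..x}" using 2 by auto
        have s2: "X -` {x<..} \<inter> {M a..M b} = {M a..M b} - {M a..m}"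
        proof -
          have "y \<in> X -` {x<..} \<longleftrightarrow> \<not> y \<le> m" if "y \<in> {M a..M b}" for y
            using gi_le_iff[OF ab M 2 that] by (auto simp: X_def m_def)
          then show ?thesis by auto
        qed
        have k: "measure lam {a..x} = measure nu {M a..m}"
          unfolding m_def by (rule key[OF ab M N lam nu H 2])
        have "emeasure P1 {x<..} = ennreal (measure lam {a..b} - measure lam {a..x})"
          using 2 by (simp add: e1 s1 L.emeasure_eq_measure L.finite_measure_Diff setsL)
        also have "\<dots> = ennreal (measure nu {M a..M b} - measure nu {M a..m})"
          using T k by simp
        also have "\<dots> = emeasure P2 {x<..}"
          using mb by (simp add: e2 s2 V.emeasure_eq_measure V.finite_measure_Diff setsV)
        finally show ?thesis .
      qed
    qed
  qed
  have part1: "\<forall>E \<in> sets lam. emeasure lam E = emeasure nu (X -` E \<inter> {M a..M b})"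
  proof
    fix E assume E: "E \<in> sets lam"
    then have Es: "E \<subseteq> {a..b}" "E \<in> sets borel" using cm_sets[OF lam] by auto
    have "emeasure lam E = emeasure P1 E" using e1[OF Es(2)] Es(1) by (simp add: Int_absorb2)
    also have "\<dots> = emeasure P2 E" using P12 by simp
    also have "\<dots> = emeasure nu (X -` E \<inter> {M a..M b})" using e2[OF Es(2)] .
    finally show "emeasure lam E = emeasure nu (X -` E \<inter> {M a..M b})" .
  qed
  have part2: "integral\<^sup>L lam f = integral\<^sup>L nu (\<lambda>y. f (X y))" if fm: "f \<in> borel_measurable lam"
  proof -
    define g where "g = (\<lambda>x. indicator {a..b} x *\<^sub>R f x)"
    have eq: "measurable lam borel = measurable (restrict_space borel {a..b}) borel"
      by (rule measurable_cong_sets[OF cm_basic(2)[OF lam] refl])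
    have gm: "g \<in> borel_measurable borel"
      using fm unfolding eq g_def by (subst (asm) borel_measurable_restrict_space_iff) auto
    have "integral\<^sup>L lam f = integral\<^sup>L lam (\<lambda>x. g (id x))"
      by (rule Bochner_Integration.integral_cong) (auto simp: spL g_def)
    also have "\<dots> = integral\<^sup>L P1 g" unfolding P1_def by (rule integral_distr[OF idm gm, symmetric])
    also have "\<dots> = integral\<^sup>L P2 g" using P12 by simp
    also have "\<dots> = integral\<^sup>L nu (\<lambda>y. g (X y))" unfolding P2_def by (rule integral_distr[OF Xm gm])
    also have "\<dots> = integral\<^sup>L nu (\<lambda>y. f (X y))"
      by (rule Bochner_Integration.integral_cong) (use Xin in \<open>auto simp: spV g_def\<close>)
    finally show ?thesis .
  qed
  show ?thesis using part1 part2 unfolding X_def by blast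
qed


end
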